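(* Let $G$ be a graph and $\overline{G}$ its $K_{n,n}$-augmentation. Then $G$ is circulant if and only if $\overline{G}$ is circulant.
   Context: A graph on $n$ vertices is circulant if its vertices can be numbered $v_0,\dots,v_{n-1}$ so that, for all $x,z,d$, whenever $v_x$ and $v_{(x+d)\bmod n}$ are adjacent, $v_z$ and $v_{(z+d)\bmod n}$ are adjacent. For a graph $G=(V,E)$ with $n$ vertices, a clone of $G$ is a graph $G'=(V',E')$ isomorphic to $G$ with $V\cap V'=\emptyset$; the $K_{n,n}$-augmentation of $G$ is the graph $\overline{G}$ with vertex set $V\cup V'$ and edge set $E\cup E'\cup\{\{v,w\}: v\in V, w\in V'\}$ (the join of $G$ with a clone). *)

theory Defs
  imports Main
begin

definition graph :: "'a set \<Rightarrow> ('a \<Rightarrow> 'a \<Rightarrow> bool) \<Rightarrow> bool" where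
  "graph V E \<longleftrightarrow> finite V \<and> (\<forall>x y. E x y \<longrightarrow> E y x) \<and> (\<forall>x. \<not> E x x)
     \<and> (\<forall>x y. E x y \<longrightarrow> x \<in> V \<and> y \<in> V)"

definition circulant :: "'a set \<Rightarrow> ('a \<Rightarrow> 'a \<Rightarrow> bool) \<Rightarrow> bool" where
  "circulant V E \<longleftrightarrow> (\<exists>v. bij_betw v {0..<card V} V \<and>
     (\<forall>x z d. x < card V \<longrightarrow> z < card V \<longrightarrow> d < card V \<longrightarrow>
        E (v x) (v ((x + d) mod card V)) \<longrightarrow> E (v z) (v ((z + d) mod card V))))"

text \<open>K_{n,n}-augmentation: join of G with a disjoint clone. Original vertices are
  tagged Inl, clone vertices Inr.\<close>
definition aug_V :: "'a set \<Rightarrow> ('a + 'a) set" where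
  "aug_V V = Inl ` V \<union> Inr ` V"

fun aug_E :: "'a set \<Rightarrow> ('a \<Rightarrow> 'a \<Rightarrow> bool) \<Rightarrow> 'a + 'a \<Rightarrow> 'a + 'a \<Rightarrow> bool" where
  "aug_E V E (Inl x) (Inl y) = E x y"
| "aug_E V E (Inr x) (Inr y) = E x y"
| "aug_E V E (Inl x) (Inr y) = (x \<in> V \<and> y \<in> V)"
| "aug_E V E (Inr x) (Inl y) = (x \<in> V \<and> y \<in> V)"

end

theory Submission
  imports Defs
begin


lemma card_aug: "finite V \<Longrightarrow> card (aug_V V) = 2 * card V"
  unfolding aug_V_def
  by (subst card_Un_disjoint) (auto simp: card_image)

lemma mod2n_div2: "((m::nat) mod (2*n)) div 2 = (m div 2) mod n"
  by (simp add: mod_mult2_eq)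

lemma mod2n_even: "even ((m::nat) mod (2*n)) = even m"
  by (metis dvd_mod_iff dvd_mult_left dvd_refl) 

lemma fwd:
  assumes fin: "finite V" and c: "circulant V E"
  shows "circulant (aug_V V) (aug_E V E)"
proof -
  define n where "n = card V"
  from c obtain v where bv: "bij_betw v {0..<n} V" and
    cv: "\<And>x z d. x < n \<Longrightarrow> z < n \<Longrightarrow> d < n \<Longrightarrow>
        E (v x) (v ((x + d) mod n)) \<Longrightarrow> E (v z) (v ((z + d) mod n))"
    unfolding circulant_def n_def by blast
  have vV: "k < n \<Longrightarrow> v k \<in> V" for k using bv by (auto simp: bij_betw_def)
  define w where "w i = (if even i then Inl (v (i div 2)) else Inr (v (i div 2)))" for i :: nat
  have cardA: "card (aug_V V) = 2*n" using card_aug[OF fin] n_def by simp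
  have bw: "bij_betw w {0..<2*n} (aug_V V)"
    unfolding bij_betw_def
  proof
    show "inj_on w {0..<2*n}"
    proof (rule inj_onI)
      fix i j assume i: "i \<in> {0..<2*n}" and j: "j \<in> {0..<2*n}" and e: "w i = w j"
      have par: "even i = even j" using e by (auto simp: w_def split: if_splits)
      have "v (i div 2) = v (j div 2)" using e by (auto simp: w_def split: if_splits)
      moreover have "i div 2 < n" "j div 2 < n" using i j by auto
      ultimately have "i div 2 = j div 2" using bv unfolding bij_betw_def inj_on_def by auto
      with par show "i = j" by (metis div_mult_mod_eq odd_iff_mod_2_eq_one even_iff_mod_2_eq_zero)
    qed
    show "w ` {0..<2*n} = aug_V V"
    proof
      show "w ` {0..<2*n} \<subseteq> aug_V V" using vV by (auto simp: w_def aug_V_def)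
      show "aug_V V \<subseteq> w ` {0..<2*n}"
      proof
        fix a assume "a \<in> aug_V V"
        then obtain b where b: "b \<in> V" "a = Inl b \<or> a = Inr b" unfolding aug_V_def by auto
        then obtain k where k: "k < n" "b = v k" using bv unfolding bij_betw_def by auto
        show "a \<in> w ` {0..<2*n}"
        proof (cases "a = Inl b")
          case True
          then have "w (2*k) = a" using k by (simp add: w_def)
          then show ?thesis using k by (metis atLeastLessThan_iff imageI zero_le mult_less_mono2 zero_less_numeral)
        next
          case False
          then have "w (2*k+1) = a" using k b by (simp add: w_def)
          moreover have "2*k+1 < 2*n" using k by simp
          ultimately show ?thesis by force
        qed
      qed
    qed
  qed
  have key: "aug_E V E (w x) (w ((x + d) mod (2*n))) =
     (if odd d then True else E (v (x div 2)) (v ((x div 2 + d div 2) mod n)))"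
    if "x < 2*n" "d < 2*n" for x d
  proof -
    have p: "even ((x + d) mod (2*n)) = even (x+d)" by (rule mod2n_even)
    have q: "((x + d) mod (2*n)) div 2 = ((x+d) div 2) mod n" by (rule mod2n_div2)
    have r1: "x div 2 < n" using that by auto
    have r2: "((x+d) div 2) mod n < n" using that by auto
    show ?thesis
    proof (cases "odd d")
      case True
      then show ?thesis using p q vV[OF r1] vV[OF r2] by (auto simp: w_def)
    next
      case False
      then have "(x+d) div 2 = x div 2 + d div 2" by auto
      then show ?thesis using False p q by (auto simp: w_def)
    qed
  qed
  show ?thesis unfolding circulant_def cardA
  proof (intro exI conjI allI impI)
    show "bij_betw w {0..<2*n} (aug_V V)" by (rule bw)
    fix x z d assume x: "x < 2*n" and z: "z < 2*n" and d: "d < 2*n"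
      and e: "aug_E V E (w x) (w ((x + d) mod (2*n)))"
    show "aug_E V E (w z) (w ((z + d) mod (2*n)))"
    proof (cases "odd d")
      case True then show ?thesis using key[OF z d] by simp
    next
      case False
      then have "E (v (x div 2)) (v ((x div 2 + d div 2) mod n))" using e key[OF x d] by simp
      then have "E (v (z div 2)) (v ((z div 2 + d div 2) mod n))"
        using cv[of "x div 2" "z div 2" "d div 2"] x z d by auto
      then show ?thesis using key[OF z d] False by simp
    qed
  qed
qed



lemma nonadj_side:
  assumes "a \<in> aug_V V" "b \<in> aug_V V" "\<not> aug_E V E a b"
  shows "isl a = isl b"
  using assms by (cases a; cases b) (auto simp: aug_V_def)

lemma modsub: "x < n \<Longrightarrow> d < (n::nat) \<Longrightarrow> ((x + d) mod n + n - x) mod n = d"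
  by (cases "x + d < n") (auto simp: le_mod_geq)

lemma dvd_diff_small:
  fixes a b q q' M d :: nat
  assumes dv: "d dvd (q*d + a + M*d - (q'*d + b))" and ab: "a < d" "b < d" and q': "q' < M"
  shows "a = b"
proof (rule ccontr)
  assume ne: "a \<noteq> b"
  have le: "q'*d + b \<le> q*d + a + M*d"
  proof -
    have "q'*d + b < q'*d + d" using ab by simp
    also have "\<dots> = (q'+1)*d" by simp
    also have "\<dots> \<le> M*d" using q' by (intro mult_le_mono1) simp
    finally show ?thesis by simp
  qed
  have "int d dvd int (q*d + a + M*d - (q'*d + b))" using dv by (simp add: int_dvd_int_iff)
  also have "int (q*d + a + M*d - (q'*d + b)) = (int a - int b) + int d * (int q + int M - int q')"
    using le by (simp add: of_nat_diff algebra_simps)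
  finally have "int d dvd (int a - int b)"
    by (simp add: dvd_add_left_iff)
  moreover have "int a - int b \<noteq> 0" using ne by simp
  ultimately have "\<bar>int d\<bar> \<le> \<bar>int a - int b\<bar>" using dvd_imp_le_int by blast
  then show False using ab by linarith
qed

lemma addback: "(a::nat) < N \<Longrightarrow> b < N \<Longrightarrow> (a + (b + N - a) mod N) mod N = b"
  by (simp add: mod_add_right_eq)

lemma bwd:
  fixes w :: "nat \<Rightarrow> 'a + 'a"
  assumes fin: "finite V" and NN: "N = 2 * card V"
    and bw: "bij_betw w {0..<N} (aug_V V)"
    and circ: "\<And>x z d. x < N \<Longrightarrow> z < N \<Longrightarrow> d < N \<Longrightarrow>
       aug_E V E (w x) (w ((x + d) mod N)) \<Longrightarrow> aug_E V E (w z) (w ((z + d) mod N))"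
  shows "circulant V E"
proof (cases "card V = 0")
  case True
  then have "V = {}" using fin by simp
  then show ?thesis unfolding circulant_def by (auto simp: bij_betw_def)
next
  case False
  define n where "n = card V"
  have n0: "0 < n" using False n_def by simp
  have N0: "0 < N" using n0 NN n_def by simp
  have wV: "i < N \<Longrightarrow> w i \<in> aug_V V" for i using bw by (auto simp: bij_betw_def)
  define s where "s i = isl (w (i mod N))" for i
  define per where "per p \<longleftrightarrow> (\<forall>i. s (i + p) = s i)" for p
  have perN: "per N" unfolding per_def s_def by simp
  have per_mult: "per p \<Longrightarrow> per (p * k)" for p k
  proof (induction k)
    case 0 then show ?case by (simp add: per_def)
  next
    case (Suc k)
    then show ?case unfolding per_def by (metis add.assoc mult_Suc_right)
  qed
  have per_ext: "per p \<Longrightarrow> s (i + p * k) = s i" for p k i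
    using per_mult unfolding per_def by blast
  have per_mod: "per p \<Longrightarrow> per q \<Longrightarrow> per (p mod q)" for p q
    unfolding per_def
  proof
    fix i assume pp: "\<forall>i. s (i + p) = s i" and qq: "\<forall>i. s (i + q) = s i"
    have "s (i + p mod q) = s (i + p mod q + q * (p div q))"
      using per_ext[of q "i + p mod q" "p div q"] qq unfolding per_def by simp
    also have "\<dots> = s (i + p)" by (metis add.assoc add.commute div_mult_mod_eq mult.commute)
    also have "\<dots> = s i" using pp by simp
    finally show "s (i + p mod q) = s i" .
  qed
  define h where "h = (LEAST p. 0 < p \<and> per p)"
  have hex: "0 < N \<and> per N" using N0 perN by simp
  have h1: "0 < h \<and> per h" unfolding h_def by (rule LeastI[of _ N]) (rule hex)
  then have h0: "0 < h" and perh: "per h" by auto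
  have hmin: "0 < p \<Longrightarrow> p < h \<Longrightarrow> \<not> per p" for p
    unfolding h_def using not_less_Least by blast
  have per_dvd: "per p \<Longrightarrow> h dvd p" for p
  proof (rule ccontr)
    assume "per p" "\<not> h dvd p"
    then have "0 < p mod h" "p mod h < h" "per (p mod h)" using h0 per_mod perh
      by (auto simp: mod_eq_0_iff_dvd[symmetric])
    then show False using hmin by blast
  qed
  have hN: "h dvd N" using per_dvd perN by simp
  have s_mod: "s i = s (i mod h)" for i
    using per_ext[OF perh, of "i mod h" "i div h"] by (metis add.commute mult.commute div_mult_mod_eq)
  define A where "A d = aug_E V E (w 0) (w (d mod N))" for d
  have Aeq: "aug_E V E (w x) (w ((x + d) mod N)) = A d" if "x < N" "d < N" for x d
    using circ[OF that(1) N0 that(2)] circ[OF N0 that(1) that(2)] unfolding A_def by auto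
  have Aper: "A d" if "d < N" "\<not> h dvd d" for d
  proof (rule ccontr)
    assume nA: "\<not> A d"
    have "per d" unfolding per_def
    proof
      fix i
      define i' where "i' = i mod N"
      have i'N: "i' < N" using N0 i'_def by simp
      have "\<not> aug_E V E (w i') (w ((i' + d) mod N))" using Aeq[OF i'N that(1)] nA by simp
      then have "isl (w i') = isl (w ((i' + d) mod N))"
        using nonadj_side wV i'N N0 by (meson mod_less_divisor)
      moreover have "(i' + d) mod N = (i + d) mod N" unfolding i'_def by (simp add: mod_add_left_eq)
      ultimately show "s (i + d) = s i" unfolding s_def i'_def by simp
    qed
    then show False using per_dvd that(2) by blast
  qed
  define R where "R = {j. j < h \<and> s j}"
  define c where "c = card R"
  obtain r where br: "bij_betw r {0..<c} R"
    using ex_bij_betw_nat_finite[of R] unfolding c_def R_def by auto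
  have rR: "k < c \<Longrightarrow> r k < h \<and> s (r k)" for k using br unfolding bij_betw_def R_def by auto
  define M where "M = N div h"
  have NM: "N = M * h" using hN unfolding M_def by simp
  define p where "p k = (k div c) * h + r (k mod c)" for k
  define P where "P = {i. i < N \<and> s i}"
  have bwP: "bij_betw w P (Inl ` V)"
      unfolding bij_betw_def
    proof
      show "inj_on w P" using bw unfolding bij_betw_def P_def by (auto intro: inj_on_subset)
      show "w ` P = Inl ` V"
      proof
        show "w ` P \<subseteq> Inl ` V"
        proof
          fix a assume "a \<in> w ` P"
          then obtain i where "i < N" "s i" "a = w i" by (auto simp: P_def)
          then show "a \<in> Inl ` V" using wV[of i] by (auto simp: s_def aug_V_def)
        qed
        show "Inl ` V \<subseteq> w ` P"
        proof
          fix a :: "'a + 'a" assume "a \<in> Inl ` V"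
          then have "a \<in> aug_V V" unfolding aug_V_def by auto
          then obtain i where "i < N" "w i = a" using bw unfolding bij_betw_def by force
          then show "a \<in> w ` P" using \<open>a \<in> Inl ` V\<close> unfolding P_def s_def by auto
        qed
      qed
    qed
  have cP: "card P = n"
    using bij_betw_same_card[OF bwP] n_def by (metis card_image inj_Inl inj_on_subset subset_UNIV)
  have Pne: "P \<noteq> {}" using cP n0 by auto
  have c0: "0 < c"
  proof -
    obtain i where "i \<in> P" using Pne by auto
    then have "i mod h \<in> R" using s_mod h0 unfolding P_def R_def by auto
    then have "R \<noteq> {}" by auto
    moreover have "finite R" unfolding R_def by simp
    ultimately show ?thesis unfolding c_def by auto
  qed
  have p_div: "p k div h = k div c" and p_mod: "p k mod h = r (k mod c)" for k
    using rR[of "k mod c"] c0 unfolding p_def by auto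
  have bp: "bij_betw p {0..<M*c} P"
    unfolding bij_betw_def
  proof (intro conjI)
    show "inj_on p {0..<M*c}"
    proof (rule inj_onI)
      fix k k' assume "k \<in> {0..<M*c}" "k' \<in> {0..<M*c}" "p k = p k'"
      then have "k div c = k' div c" "r (k mod c) = r (k' mod c)" using p_div p_mod by metis+
      moreover have "k mod c < c" "k' mod c < c" using c0 by auto
      ultimately have "k mod c = k' mod c" using br unfolding bij_betw_def inj_on_def by auto
      then show "k = k'" using \<open>k div c = k' div c\<close> by (metis div_mult_mod_eq)
    qed
    show "p ` {0..<M*c} = P"
    proof
      show "p ` {0..<M*c} \<subseteq> P"
      proof
        fix i assume "i \<in> p ` {0..<M*c}"
        then obtain k where k: "k < M*c" "i = p k" by auto
        have "k div c < M" using k c0 by (simp add: div_less_iff_less_mult)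
        then have "k div c + 1 \<le> M" by simp
        then have "(k div c) * h + h \<le> M * h" by (metis add_mult_distrib mult_1 mult_le_mono1)
        moreover have "r (k mod c) < h" using rR c0 by auto
        ultimately have "i < N" using NM k unfolding p_def by linarith
        moreover have "s i" using s_mod[of i] k p_mod rR[of "k mod c"] c0 by auto
        ultimately show "i \<in> P" unfolding P_def by auto
      qed
      show "P \<subseteq> p ` {0..<M*c}"
      proof
        fix i assume iP: "i \<in> P"
        then have "i mod h \<in> R" using s_mod h0 unfolding P_def R_def by auto
        then obtain j where j: "j < c" "r j = i mod h" using br unfolding bij_betw_def by force
        define k where "k = (i div h) * c + j"
        have kd: "k div c = i div h" "k mod c = j" using j unfolding k_def by auto
        have "p k = i" unfolding p_def kd j(2) by simp
        moreover have "i div h < M" using iP NM h0 unfolding P_def by (simp add: div_less_iff_less_mult)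
        then have "i div h + 1 \<le> M" by simp
        then have "(i div h) * c + c \<le> M * c" by (metis add_mult_distrib mult_1 mult_le_mono1)
        then have "k < M*c" using j unfolding k_def by linarith
        ultimately show "i \<in> p ` {0..<M*c}" by force
      qed
    qed
  qed
  have nMc: "n = M * c" using bij_betw_same_card[OF bp] cP by simp
  have bp': "bij_betw p {0..<n} P" using bp nMc by simp
  have pN: "k < n \<Longrightarrow> p k < N" for k using bp' unfolding bij_betw_def P_def by auto
  have wP: "k < n \<Longrightarrow> w (p k) \<in> Inl ` V" for k
  proof -
    assume k: "k < n"
    then have "p k \<in> P" using bp' unfolding bij_betw_def by auto
    then show "w (p k) \<in> Inl ` V" using bwP unfolding bij_betw_def by blast
  qed
  define v where "v k = projl (w (p k))" for k
  have wv: "k < n \<Longrightarrow> w (p k) = Inl (v k)" for k using wP[of k] unfolding v_def by auto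
  have bv: "bij_betw v {0..<n} V"
  proof -
    note b1 = bwP
    have b2: "bij_betw projl (Inl ` V) V" unfolding bij_betw_def inj_on_def by force
    have "bij_betw (projl \<circ> (w \<circ> p)) {0..<n} V"
      by (rule bij_betw_trans[OF bij_betw_trans[OF bp' b1] b2])
    then show ?thesis unfolding v_def comp_def by simp
  qed
  define F where "F a = (if a mod c \<noteq> 0 then True else A (h * (a div c)))" for a
  have keyE: "E (v x) (v y) = F ((y + n - x) mod n)" if x: "x < n" and y: "y < n" for x y
  proof -
    define qx jx qy jy where "qx = x div c" "jx = x mod c" "qy = y div c" "jy = y mod c"
    have xe: "x = qx*c + jx" and ye: "y = qy*c + jy" unfolding qx_jx_qy_jy_def by simp_all
    have jc: "jx < c" "jy < c" using c0 unfolding qx_jx_qy_jy_def by simp_all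
    have qM: "qx < M" "qy < M" using x y nMc c0 unfolding qx_jx_qy_jy_def
      by (simp_all add: div_less_iff_less_mult)
    have px: "p x = qx*h + r jx" and py: "p y = qy*h + r jy" unfolding p_def qx_jx_qy_jy_def by simp_all
    have rh: "r jx < h" "r jy < h" using rR jc by auto
    define \<delta> where "\<delta> = (p y + N - p x) mod N"
    have dN: "\<delta> < N" using N0 unfolding \<delta>_def by simp
    have "E (v x) (v y) = aug_E V E (w (p x)) (w (p y))" using wv x y by simp
    also have "p y = (p x + \<delta>) mod N" unfolding \<delta>_def using addback pN x y by simp
    also have "aug_E V E (w (p x)) (w ((p x + \<delta>) mod N)) = A \<delta>" using Aeq pN[OF x] dN by simp
    finally have EA: "E (v x) (v y) = A \<delta>" .
    define a where "a = (y + n - x) mod n"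
    show ?thesis
    proof (cases "jx = jy")
      case False
      have "\<not> h dvd \<delta>"
      proof
        assume "h dvd \<delta>"
        then have "h dvd (p y + N - p x)" unfolding \<delta>_def using hN
          by (simp add: dvd_mod_iff)
        then have "h dvd (qy*h + r jy + M*h - (qx*h + r jx))" using px py NM by simp
        then have "r jy = r jx" using dvd_diff_small rh qM by blast
        then show False using False br jc unfolding bij_betw_def inj_on_def by auto
      qed
      then have "A \<delta>" using Aper dN by blast
      moreover have "a mod c \<noteq> 0"
      proof
        assume "a mod c = 0"
        then have "c dvd a" by auto
        moreover have "c dvd n" using nMc by simp
        ultimately have "c dvd (y + n - x)" unfolding a_def by (simp add: dvd_mod_iff)
        then have "c dvd (qy*c + jy + M*c - (qx*c + jx))" using xe ye nMc by simp
        then have "jy = jx" using dvd_diff_small jc qM by blast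
        then show False using False by simp
      qed
      ultimately show ?thesis using EA unfolding F_def a_def by simp
    next
      case True
      define t where "t = qy + M - qx"
      have "y + n - x = t * c" unfolding t_def using xe ye nMc True qM
        by (simp add: algebra_simps diff_mult_distrib)
      then have ae: "a = (t mod M) * c" unfolding a_def using nMc by (simp add: mod_mult_mult2)
      have "p y + N - p x = t * h" unfolding t_def using px py NM True qM
        by (simp add: algebra_simps diff_mult_distrib)
      then have de: "\<delta> = (t mod M) * h" unfolding \<delta>_def using NM by (simp add: mod_mult_mult2)
      show ?thesis using EA ae de c0 unfolding F_def a_def[symmetric] by (simp add: mult.commute)
    qed
  qed
  show ?thesis unfolding circulant_def n_def[symmetric]
  proof (intro exI conjI allI impI)
    show "bij_betw v {0..<n} V" by (rule bv)
    fix x z d assume "x < n" "z < n" "d < n" "E (v x) (v ((x + d) mod n))"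
    then show "E (v z) (v ((z + d) mod n))"
      using keyE modsub n0 by (metis mod_less_divisor)
  qed
qed


theorem lemma10:
  fixes V :: "'a set" and E :: "'a \<Rightarrow> 'a \<Rightarrow> bool"
  assumes "graph V E"
  shows "circulant V E \<longleftrightarrow> circulant (aug_V V) (aug_E V E)"
proof
  have fin: "finite V" using assms by (simp add: graph_def)
  show "circulant V E \<Longrightarrow> circulant (aug_V V) (aug_E V E)" using fwd fin by blast
  assume "circulant (aug_V V) (aug_E V E)"
  then obtain w where bw: "bij_betw w {0..<card (aug_V V)} (aug_V V)" and
    cw: "\<And>x z d. x < card (aug_V V) \<Longrightarrow> z < card (aug_V V) \<Longrightarrow> d < card (aug_V V) \<Longrightarrow>
       aug_E V E (w x) (w ((x + d) mod card (aug_V V))) \<Longrightarrow> aug_E V E (w z) (w ((z + d) mod card (aug_V V)))"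
    unfolding circulant_def by blast
  show "circulant V E" by (rule bwd[OF fin card_aug[OF fin] bw cw])
qed

end
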